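(* Let $n\in\mathbb N$. Then there exists $k_0\in\mathbb N$ such that for all $k,j\in\mathbb N$ with $j\ge k\ge k_0$, $$p^{(j)}_n\le 2^{j-k}p^{(k)}_n\prod_{i=1}^{j-k}\left(\log p^{(k)}_n+i\log i\,\log\log p^{(k)}_n\right).$$
   Context: Let $p_n$ denote the $n$-th prime number. Define $p^{(0)}_n=n$ and recursively $p^{(k+1)}_n=p_{p^{(k)}_n}$ for $k\in\mathbb N_0$. $\log$ is the natural logarithm; an empty product equals $1$. *)

theory Defs
  imports Complex_Main "HOL-Computational_Algebra.Primes" "HOL-Library.Infinite_Set"
begin

text \<open>The n-th prime, 1-indexed: nth_prime 1 = 2, nth_prime 2 = 3, ...
  (enumerate is 0-indexed, hence the shift). Only meaningful for n >= 1.\<close>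
definition nth_prime :: "nat \<Rightarrow> nat" where
  "nth_prime n = enumerate {p. prime p} (n - 1)"

definition iter_prime :: "nat \<Rightarrow> nat \<Rightarrow> nat" where
  "iter_prime k n = (nth_prime ^^ k) n"

end

theory Submission imports Defs "HOL-Real_Asymp.Real_Asymp" begin

lemma suc_div_split:
  fixes n q :: nat assumes "q > 0"
  shows "Suc n div q = n div q + (if q dvd Suc n then 1 else 0)"
  using assms by (auto simp: div_Suc dvd_eq_mod_eq_0)

lemma legendre:
  fixes p :: nat assumes p: "prime p"
  shows "n \<le> K \<Longrightarrow> multiplicity p (fact n) = (\<Sum>i=1..K. n div p ^ i)"
proof (induction n)
  case 0
  then show ?case by simp
next
  case (Suc n)
  have p1: "p > 1" using p prime_gt_1_nat by blast
  have "multiplicity p (fact (Suc n) :: nat) = multiplicity p (Suc n * fact n)"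
    by (simp add: fact_Suc)
  also have "\<dots> = multiplicity p (Suc n) + multiplicity p (fact n :: nat)"
    using p by (intro prime_elem_multiplicity_mult_distrib) auto
  also have "multiplicity p (fact n :: nat) = (\<Sum>i=1..K. n div p ^ i)" using Suc by simp
  also have "multiplicity p (Suc n) = card {i\<in>{1..K}. p ^ i dvd Suc n}"
  proof -
    have "p ^ multiplicity p (Suc n) dvd Suc n" by (rule multiplicity_dvd)
    hence "p ^ multiplicity p (Suc n) \<le> Suc n" by (rule dvd_imp_le) simp
    moreover have "multiplicity p (Suc n) < p ^ multiplicity p (Suc n)"
    proof -
      have "multiplicity p (Suc n) < 2 ^ multiplicity p (Suc n)" by (rule less_exp)
      also have "(2::nat) ^ multiplicity p (Suc n) \<le> p ^ multiplicity p (Suc n)"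
        using p1 by (intro power_mono) auto
      finally show ?thesis .
    qed
    ultimately have "multiplicity p (Suc n) \<le> K" using Suc.prems by linarith
    hence "{i\<in>{1..K}. p ^ i dvd Suc n} = {1..multiplicity p (Suc n)}"
    proof -
      have key: "p^i dvd Suc n \<longleftrightarrow> i \<le> multiplicity p (Suc n)" for i
        by (rule power_dvd_iff_le_multiplicity) (use p1 in auto)
      show ?thesis using \<open>multiplicity p (Suc n) \<le> K\<close> by (auto simp only: key atLeastAtMost_iff mem_Collect_eq)
    qed
    thus ?thesis by simp
  qed
  also have "card {i\<in>{1..K}. p ^ i dvd Suc n} = (\<Sum>i=1..K. if p ^ i dvd Suc n then 1 else 0)"
    by (simp add: sum.If_cases Int_def conj_commute)
  also have "(\<Sum>i=1..K. if p ^ i dvd Suc n then 1 else 0) + (\<Sum>i=1..K. n div p ^ i)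
      = (\<Sum>i=1..K. Suc n div p ^ i)"
    using p1 by (simp add: sum.distrib[symmetric] suc_div_split add.commute)
  finally show ?case .
qed


lemma div_double_le:
  fixes N q :: nat assumes "q > 0"
  shows "2*N div q \<le> 2*(N div q) + 1"
proof -
  have "N < (N div q + 1) * q" using assms
    by (metis add.commute div_mult_mod_eq mod_less_divisor mult.commute nat_add_left_cancel_less distrib_right mult_1)
  hence "2*N < (2*(N div q) + 2) * q" by (simp add: algebra_simps)
  hence "2*N div q < 2*(N div q) + 2" using assms by (simp add: div_less_iff_less_mult)
  thus ?thesis by simp
qed

lemma double_div_le:
  fixes N q :: nat
  shows "2*(N div q) \<le> 2*N div q"
proof (cases "q = 0")
  case False
  have "N div q * q \<le> N" by (metis div_mult_mod_eq le_add1)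
  hence "2*(N div q) * q \<le> 2*N" by simp
  thus ?thesis using False by (simp add: less_eq_div_iff_mult_less_eq)
qed simp

lemma binom_mult_bound:
  fixes p N :: nat assumes p: "prime p" and N: "N \<ge> 1"
  shows "p ^ multiplicity p ((2*N) choose N) \<le> 2*N"
proof -
  define C where "C = (2*N) choose N"
  define K where "K = 2*N"
  have p1: "p > 1" using p prime_gt_1_nat by blast
  have C0: "C \<noteq> 0" unfolding C_def by simp
  have "fact N * fact (2*N - N) * C = (fact (2*N) :: nat)" unfolding C_def
    by (rule binomial_fact_lemma) simp
  hence eq: "fact N * fact N * C = (fact (2*N) :: nat)" by simp
  have "multiplicity p (fact (2*N) :: nat) = multiplicity p (fact N * fact N * C :: nat)"
    using eq by simp
  also have "\<dots> = multiplicity p (fact N :: nat) + multiplicity p (fact N :: nat) + multiplicity p C"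
    using p C0 by (simp add: prime_elem_multiplicity_mult_distrib)
  finally have m: "multiplicity p C = multiplicity p (fact (2*N) :: nat) - 2 * multiplicity p (fact N :: nat)"
    by simp
  have "multiplicity p C = (\<Sum>i=1..K. 2*N div p^i) - (\<Sum>i=1..K. 2*(N div p^i))"
  proof -
    have l1: "multiplicity p (fact (2*N)::nat) = (\<Sum>i=1..K. 2*N div p^i)"
      unfolding K_def by (rule legendre[OF p]) simp
    have l2: "multiplicity p (fact N::nat) = (\<Sum>i=1..K. N div p^i)"
      unfolding K_def by (rule legendre[OF p]) simp
    show ?thesis unfolding m l1 l2 by (simp add: sum_distrib_left)
  qed
  also have "\<dots> = (\<Sum>i=1..K. 2*N div p^i - 2*(N div p^i))"
    by (rule sum_subtractf_nat[symmetric]) (simp add: double_div_le)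
  finally have ms: "multiplicity p C = (\<Sum>i=1..K. 2*N div p^i - 2*(N div p^i))" .
  define e where "e = multiplicity p C"
  show ?thesis
  proof (rule ccontr)
    assume "\<not> ?thesis"
    hence big: "p ^ e > 2*N" unfolding e_def C_def by simp
    have zero: "2*N div p^i - 2*(N div p^i) = 0" if "i \<ge> e" for i
    proof -
      have "p^e \<le> p^i" using p1 that by (intro power_increasing) auto
      hence "2*N < p^i" using big by linarith
      thus ?thesis by simp
    qed
    have "e = (\<Sum>i=1..K. 2*N div p^i - 2*(N div p^i))" unfolding e_def by (rule ms)
    also have "\<dots> = (\<Sum>i\<in>{1..K} \<inter> {..<e}. 2*N div p^i - 2*(N div p^i))"
    proof (rule sum.mono_neutral_right)
      show "\<forall>i\<in>{1..K} - {1..K} \<inter> {..<e}. 2*N div p^i - 2*(N div p^i) = 0"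
      proof
        fix i assume "i \<in> {1..K} - {1..K} \<inter> {..<e}"
        hence "i \<ge> e" by auto
        thus "2*N div p^i - 2*(N div p^i) = 0" by (rule zero)
      qed
    qed auto
    also have "\<dots> \<le> (\<Sum>i\<in>{1..K} \<inter> {..<e}. 1)"
    proof (rule sum_mono)
      fix i :: nat
      have "p^i > 0" using p1 by simp
      from div_double_le[OF this, of N] show "2*N div p^i - 2*(N div p^i) \<le> 1" by simp
    qed
    also have "\<dots> \<le> card {1..<e}" by (intro eq_refl[THEN order.trans[OF _ card_mono]]) auto
    finally have "e \<le> e - 1" by simp
    moreover have "e \<noteq> 0" proof assume "e = 0" thus False using big N by simp qed
    ultimately show False by simp
  qed
qed

lemma binom_le_pi:
  fixes N :: nat assumes N: "N \<ge> 1"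
  shows "(2*N) choose N \<le> (2*N) ^ card {p. prime p \<and> p \<le> 2*N}"
proof -
  define C where "C = (2*N) choose N"
  have C0: "C > 0" unfolding C_def by simp
  have sub: "prime_factors C \<subseteq> {p. prime p \<and> p \<le> 2*N}"
  proof
    fix p assume "p \<in> prime_factors C"
    hence pp: "prime p" and "p dvd C" by auto
    have "fact N * fact N * C = (fact (2*N)::nat)" unfolding C_def
      using binomial_fact_lemma[of N "2*N"] by simp
    hence "C dvd fact (2*N)" by (metis dvd_triv_right)
    hence "p dvd fact (2*N)" using \<open>p dvd C\<close> by (rule dvd_trans[rotated])
    thus "p \<in> {p. prime p \<and> p \<le> 2*N}" using pp prime_dvd_fact_iff by auto
  qed
  have "C = (\<Prod>p\<in>prime_factors C. p ^ multiplicity p C)" using prime_factorization_nat[OF C0] .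
  also have "\<dots> \<le> (\<Prod>p\<in>prime_factors C. 2*N)"
    by (rule prod_mono) (auto simp: C_def intro!: binom_mult_bound N)
  also have "\<dots> = (2*N) ^ card (prime_factors C)" by simp
  also have "\<dots> \<le> (2*N) ^ card {p. prime p \<and> p \<le> 2*N}"
    using N sub by (intro power_increasing card_mono) auto
  finally show ?thesis unfolding C_def .
qed


lemma pi_lower:
  fixes N :: nat assumes N: "N \<ge> 1"
  shows "real N * ln 4 \<le> (real (card {p. prime p \<and> p \<le> 2*N}) + 1) * ln (2 * real N)"
proof -
  define c where "c = card {p. prime p \<and> p \<le> 2*N}"
  have "4^N / (2*real N) \<le> real ((2*N) choose N)"
    using N by (intro central_binomial_lower_bound) simp
  also have "\<dots> \<le> real ((2*N) ^ c)" unfolding c_def using binom_le_pi[OF N] by linarith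
  finally have "4^N \<le> (2*real N) * (2 * real N) ^ c" using N by (simp add: field_simps)
  hence "(4::real)^N \<le> (2 * real N) ^ (c+1)" by simp
  hence "ln ((4::real)^N) \<le> ln ((2 * real N) ^ (c+1))" using N by (subst ln_le_cancel_iff) auto
  also have "ln ((2 * real N) ^ (c+1)) = real (c+1) * ln (2 * real N)" using N ln_realpow[of "2*real N" "c+1"] by simp
  also have "ln ((4::real)^N) = real N * ln 4" using ln_realpow[of 4 N] by simp
  finally show ?thesis by (simp add: c_def algebra_simps)
qed

lemma enum_le:
  fixes S :: "nat set"
  assumes S: "infinite S" and y: "y \<ge> 1" and c: "card {s\<in>S. s \<le> M} \<ge> y"
  shows "enumerate S (y-1) \<le> M"
proof (rule ccontr)
  assume "\<not> ?thesis"
  hence big: "enumerate S (y-1) > M" by simp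
  have "{s\<in>S. s \<le> M} \<subseteq> enumerate S ` {..<y-1}"
  proof
    fix s assume s: "s \<in> {s\<in>S. s \<le> M}"
    then obtain i where i: "enumerate S i = s" using enumerate_Ex[OF S] by blast
    have "i < y - 1"
    proof (rule ccontr)
      assume "\<not> i < y - 1"
      hence "enumerate S (y-1) \<le> enumerate S i" using S by simp
      thus False using big s i by simp
    qed
    thus "s \<in> enumerate S ` {..<y-1}" using i by blast
  qed
  hence "card {s\<in>S. s \<le> M} \<le> card (enumerate S ` {..<y-1})" by (intro card_mono) auto
  also have "\<dots> \<le> y - 1" using card_image_le[of "{..<y-1}" "enumerate S"] by simp
  finally show False using c y by simp
qed

lemma enum_primes_ge: "enumerate {p::nat. prime p} i \<ge> i + 2"
proof (induction i)
  case 0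
  have "enumerate {p::nat. prime p} 0 \<in> {p. prime p}" using primes_infinite by (rule enumerate_in_set)
  hence "enumerate {p::nat. prime p} 0 \<ge> 2" using prime_ge_2_nat by blast
  thus ?case by simp
next
  case (Suc i)
  have "enumerate {p::nat. prime p} i < enumerate {p::nat. prime p} (Suc i)"
    using primes_infinite by (rule enumerate_step)
  thus ?case using Suc by simp
qed

lemma nth_prime_ge: "y \<ge> 1 \<Longrightarrow> nth_prime y \<ge> y + 1"
  unfolding nth_prime_def using enum_primes_ge[of "y-1"] by simp

lemma nth_prime_mono: "1 \<le> a \<Longrightarrow> a \<le> b \<Longrightarrow> nth_prime a \<le> nth_prime b"
  unfolding nth_prime_def using primes_infinite by simp

lemma ln2_lower: "ln (2::real) \<ge> 7/12"
proof -
  have a: "ln (1 - 1/4::real) \<le> - (1/4)" by (rule ln_one_minus_pos_upper_bound) auto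
  have b: "ln (1 - 1/3::real) \<le> - (1/3)" by (rule ln_one_minus_pos_upper_bound) auto
  have "ln (1 - 1/4::real) + ln (1 - 1/3) = ln (3/4 * (2/3))" using ln_mult[of "3/4::real" "2/3"] by simp
  also have "ln (3/4 * (2/3)::real) = ln (inverse 2)"
  proof -
    have "(3/4 * (2/3)::real) = inverse 2" by simp
    thus ?thesis by (simp only:)
  qed
  also have "\<dots> = - ln 2" using ln_inverse[of "2::real"] by (simp only:)
  finally show ?thesis using a b by linarith
qed

lemma asymp1: "eventually (\<lambda>y::real. (y+1) * ln (2*y*ln y) \<le> (2*y*ln y - 2) * ln 2 \<and> 2*y*ln y \<ge> 4) at_top"
proof (rule eventually_conj)
  have "eventually (\<lambda>y::real. (y+1) * ln (2*y*ln y) \<le> (2*y*ln y - 2) * (7/12) \<and> 2*y*ln y \<ge> 2) at_top"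
    by (intro eventually_conj; real_asymp)
  thus "eventually (\<lambda>y::real. (y+1) * ln (2*y*ln y) \<le> (2*y*ln y - 2) * ln 2) at_top"
  proof (rule eventually_mono)
    fix y :: real assume h: "(y+1) * ln (2*y*ln y) \<le> (2*y*ln y - 2) * (7/12) \<and> 2*y*ln y \<ge> 2"
    have "(2*y*ln y - 2) * (7/12) \<le> (2*y*ln y - 2) * ln 2"
      using h ln2_lower by (intro mult_left_mono) auto
    thus "(y+1) * ln (2*y*ln y) \<le> (2*y*ln y - 2) * ln 2" using h by linarith
  qed
  show "eventually (\<lambda>y::real. 2*y*ln y \<ge> 4) at_top"
    by real_asymp
qed


lemma ln_lower_2:
  fixes t :: real assumes t: "t \<ge> 0"
  shows "2*t/(t+2) \<le> ln (1+t)"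
proof -
  have "(\<lambda>s. ln (1+s) - 2*s/(s+2)) 0 \<le> (\<lambda>s. ln (1+s) - 2*s/(s+2)) t"
  proof (rule DERIV_nonneg_imp_nondecreasing[OF t])
    fix s :: real assume s: "0 \<le> s" "s \<le> t"
    have d: "((\<lambda>s. ln (1+s) - 2*s/(s+2)) has_real_derivative (1/(1+s) - 4/(s+2)^2)) (at s)"
      using s by (auto intro!: derivative_eq_intros simp: field_simps power2_eq_square)
    have "0 \<le> s*s" by simp
    hence "4*(1+s) \<le> (s+2)^2" by (simp add: power2_eq_square algebra_simps)
    hence "4/(s+2)^2 \<le> 1/(1+s)" using s by (simp add: divide_simps)
    thus "\<exists>y. DERIV (\<lambda>s. ln (1+s) - 2*s/(s+2)) s :> y \<and> y \<ge> 0" using d by force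
  qed
  thus ?thesis by simp
qed

lemma nth_prime_bound: "\<exists>Y. \<forall>y::nat. y \<ge> Y \<longrightarrow> real (nth_prime y) \<le> 2 * real y * ln (real y)"
proof -
  obtain Y0 :: real where Y0: "\<And>t::real. t \<ge> Y0 \<Longrightarrow> (t+1) * ln (2*t*ln t) \<le> (2*t*ln t - 2) * ln 2 \<and> 2*t*ln t \<ge> 4"
    using asymp1 unfolding eventually_at_top_linorder by blast
  show ?thesis
  proof (intro exI allI impI)
    fix y :: nat assume yY: "y \<ge> max 1 (nat \<lceil>Y0\<rceil>)"
    define x where "x = 2 * real y * ln (real y)"
    have "real y \<ge> Y0" using yY by linarith
    from Y0[OF this] have h1: "(real y + 1) * ln x \<le> (x - 2) * ln 2" and h2: "x \<ge> 4"
      unfolding x_def by auto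
    define M where "M = nat \<lfloor>x\<rfloor>"
    define N where "N = M div 2"
    have Mx: "real M \<le> x" "real M > x - 1" unfolding M_def using h2 by linarith+
    have N1: "N \<ge> 1" unfolding N_def using Mx h2 by linarith
    have NM: "2*N \<le> M" "2*N + 1 \<ge> M" unfolding N_def by linarith+
    define c where "c = card {p. prime p \<and> p \<le> 2*N}"
    have lnx: "ln x > 0" using h2 by simp
    have "(x - 2) * ln 2 \<le> real (2*N) * ln 2"
      using NM Mx by (intro mult_right_mono) auto
    also have "\<dots> = real N * ln 4"
    proof -
      have "ln (4::real) = 2 * ln 2" using ln_realpow[of "2::real" 2] by simp
      thus ?thesis by simp
    qed
    also have "\<dots> \<le> (real c + 1) * ln (2 * real N)" unfolding c_def by (rule pi_lower[OF N1])
    also have "\<dots> \<le> (real c + 1) * ln x"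
      using NM Mx N1 by (intro mult_left_mono) auto
    finally have "(real y + 1) * ln x \<le> (real c + 1) * ln x" using h1 by linarith
    hence "y \<le> c" using lnx by simp
    also have "c \<le> card {s\<in>{p. prime p}. s \<le> M}" unfolding c_def
      using NM by (intro card_mono) auto
    finally have "nth_prime y \<le> M" unfolding nth_prime_def
      using yY by (intro enum_le primes_infinite) auto
    thus "real (nth_prime y) \<le> 2 * real y * ln (real y)" using Mx unfolding x_def by linarith
  qed
qed


lemma key_ineq:
  fixes x :: real and m :: nat
  assumes L6: "ln (ln x) \<ge> 6" and x1: "x > 1"
  shows "ln (2^m * x * (\<Prod>i=1..m. ln x + real i * ln (real i) * ln (ln x)))
           \<le> ln x + real (Suc m) * ln (real (Suc m)) * ln (ln x)"
proof -
  define L where "L = ln (ln x)"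
  define lx where "lx = ln x"
  define l where "l = ln (real m + 1)"
  define a where "a = (\<lambda>i::nat. lx + real i * ln (real i) * L)"
  have lx0: "lx > 0" unfolding lx_def using x1 by simp
  have Llx: "L \<le> lx" unfolding L_def lx_def using ln_less_self[OF lx0[unfolded lx_def]] by simp
  have L0: "L \<ge> 6" unfolding L_def using L6 .
  have l0: "l \<ge> 0" unfolding l_def by simp
  have ilni: "real i * ln (real i) \<ge> 0" if "i \<ge> 1" for i :: nat
    using that by simp
  have apos: "a i > 0" if "i \<ge> 1" for i
    unfolding a_def using ilni[OF that] L0 lx0 by (simp add: add_pos_nonneg)
  have aub: "ln (a i) \<le> L + 2 * l" if i: "i \<in> {1..m}" for i
  proof -
    have i1: "i \<ge> 1" "i \<le> m" using i by auto
    have "a i \<le> lx + real i * ln (real i) * lx"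
      unfolding a_def using ilni[OF i1(1)] Llx by (intro add_left_mono mult_left_mono) auto
    also have "\<dots> = lx * (1 + real i * ln (real i))" by (simp add: algebra_simps)
    also have "\<dots> \<le> lx * (real m + 1)^2"
    proof (intro mult_left_mono)
      have "ln (real i) \<le> real i - 1" using i1 by (intro ln_le_minus_one) auto
      hence "ln (real i) \<le> real m" using i1 by linarith
      hence "real i * ln (real i) \<le> real m * real m"
        using i1 by (intro mult_mono) auto
      thus "1 + real i * ln (real i) \<le> (real m + 1)^2" by (simp add: power2_eq_square algebra_simps)
    qed (use lx0 in auto)
    finally have "a i \<le> lx * (real m + 1)^2" .
    hence "ln (a i) \<le> ln (lx * (real m + 1)^2)" using apos[OF i1(1)] by simp
    also have "\<dots> = L + 2 * l" unfolding L_def l_def lx_def using lx0[unfolded lx_def]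
      by (simp add: ln_mult ln_realpow)
    finally show ?thesis .
  qed
  have "ln (2^m * x * (\<Prod>i=1..m. a i)) = ln (2^m) + ln x + ln (\<Prod>i=1..m. a i)"
  proof -
    have P: "(\<Prod>i=1..m. a i) > 0" by (rule prod_pos) (use apos in auto)
    have "ln (2^m * x * (\<Prod>i=1..m. a i)) = ln (2^m * x) + ln (\<Prod>i=1..m. a i)"
      using P x1 by (intro ln_mult_pos) auto
    also have "ln (2^m * x) = ln (2^m) + ln x" using x1 by (intro ln_mult_pos) auto
    finally show ?thesis .
  qed
  also have "ln (\<Prod>i=1..m. a i) = (\<Sum>i=1..m. ln (a i))"
    using apos by (intro ln_prod) (auto, fastforce)
  also have "(\<Sum>i=1..m. ln (a i)) \<le> (\<Sum>i=1..m. L + 2 * l)" by (intro sum_mono aub)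
  also have "(\<Sum>i=1..m. L + 2 * l) = real m * L + 2 * (real m * l)" by (simp add: algebra_simps)
  also have "ln ((2::real)^m) = real m * ln 2" by (simp add: ln_realpow)
  finally have A: "ln (2^m * x * (\<Prod>i=1..m. a i)) \<le> real m * ln 2 + lx + real m * L + 2 * (real m * l)"
    unfolding lx_def by simp
  have B: "real m * ln 2 + real m * L + 2 * (real m * l) \<le> (real m + 1) * l * L"
  proof (cases "m = 0")
    case True thus ?thesis using l0 L0 by simp
  next
    case False
    hence m1: "real m \<ge> 1" by simp
    have l2: "ln 2 \<le> l" unfolding l_def using m1 by simp
    have "2 * real m / (real m + 2) \<le> l" unfolding l_def using ln_lower_2[of "real m"] by (simp add: add.commute)
    hence f1: "2 * real m \<le> (real m + 2) * l" by (simp add: divide_simps mult.commute)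
    have f1': "2 * real m * L \<le> (real m + 2) * l * L" using f1 L0 by (intro mult_right_mono) auto
    have f2: "6 * (real m * l) \<le> L * (real m * l)" using L0 l0 by (intro mult_right_mono) auto
    have f3: "real m * ln 2 \<le> real m * l" using l2 by (intro mult_left_mono) auto
    have eq: "(real m + 1) * l * L = ((real m + 2) * l * L) / 2 + (L * (real m * l)) / 2"
      by (simp add: field_simps)
    have eq2: "2 * real m * L = 2 * (real m * L)" by simp
    show ?thesis using f1' f2 f3 eq eq2 by linarith
  qed
  have "ln (2^m * x * (\<Prod>i=1..m. a i)) \<le> lx + (real m + 1) * l * L" using A B by linarith
  thus ?thesis unfolding a_def lx_def l_def L_def by (simp add: add.commute)
qed


lemma iter_ge: "n \<ge> 1 \<Longrightarrow> iter_prime k n \<ge> n + k"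
proof (induction k)
  case 0 thus ?case by (simp add: iter_prime_def)
next
  case (Suc k)
  have "iter_prime (Suc k) n = nth_prime (iter_prime k n)" by (simp add: iter_prime_def)
  moreover have "nth_prime (iter_prime k n) \<ge> iter_prime k n + 1"
    using Suc by (intro nth_prime_ge) auto
  ultimately show ?case using Suc by simp
qed

theorem theorem10:
  fixes n :: nat
  assumes "n \<ge> 1"
  shows "\<exists>k0 \<ge> 1. \<forall>k j. k0 \<le> k \<and> k \<le> j \<longrightarrow>
    real (iter_prime j n) \<le> 2 ^ (j - k) * real (iter_prime k n) *
      (\<Prod>i = 1..j - k. ln (real (iter_prime k n)) + real i * ln (real i) * ln (ln (real (iter_prime k n))))"
proof -
  obtain Y where Y: "\<And>y::nat. y \<ge> Y \<Longrightarrow> real (nth_prime y) \<le> 2 * real y * ln (real y)"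
    using nth_prime_bound by blast
  define k0 where "k0 = max 1 (max Y (nat \<lceil>exp (exp 6) :: real\<rceil>))"
  show ?thesis
  proof (intro exI[of _ k0] conjI allI impI)
    show "1 \<le> k0" unfolding k0_def by simp
    fix k j assume kj: "k0 \<le> k \<and> k \<le> j"
    define x where "x = real (iter_prime k n)"
    define B where "B = (\<lambda>m. 2 ^ m * x * (\<Prod>i = 1..m. ln x + real i * ln (real i) * ln (ln x)))"
    have xk: "iter_prime k n \<ge> n + k" using iter_ge assms by blast
    have "real k \<ge> exp (exp 6)" using kj unfolding k0_def by linarith
    hence xe: "x \<ge> exp (exp 6)" unfolding x_def using xk by linarith
    have x1: "x > 1" using xe by (smt (verit) one_less_exp_iff exp_gt_zero)
    have "ln x \<ge> ln (exp (exp 6))" using xe x1 by (subst ln_le_cancel_iff) auto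
    hence lx: "ln x \<ge> exp 6" by simp
    have lxp: "ln x > 0" using x1 by simp
    hence "ln (ln x) \<ge> ln (exp 6)" using lx by (subst ln_le_cancel_iff) auto
    hence L6: "ln (ln x) \<ge> 6" by simp
    have main: "real (iter_prime (k+m) n) \<le> B m" for m
    proof (induction m)
      case 0 thus ?case by (simp add: B_def x_def)
    next
      case (Suc m)
      define z where "z = iter_prime (k+m) n"
      have zge: "z \<ge> n + (k+m)" unfolding z_def using iter_ge assms by blast
      have zY: "z \<ge> Y" using zge kj unfolding k0_def by simp
      have z1: "real z \<ge> 1" using zge assms by simp
      have zB: "real z \<le> B m" using Suc unfolding z_def .
      have "iter_prime (k + Suc m) n = nth_prime z" by (simp add: iter_prime_def z_def)
      hence "real (iter_prime (k + Suc m) n) \<le> 2 * real z * ln (real z)" using Y[OF zY] by simp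
      also have "\<dots> \<le> 2 * B m * ln (B m)"
      proof -
        have "ln (real z) \<le> ln (B m)" using z1 zB by (subst ln_le_cancel_iff) auto
        moreover have "ln (real z) \<ge> 0" using z1 by simp
        ultimately show ?thesis using z1 zB by (intro mult_mono) auto
      qed
      also have "\<dots> \<le> 2 * B m * (ln x + real (Suc m) * ln (real (Suc m)) * ln (ln x))"
        using key_ineq[OF L6 x1, of m] z1 zB by (intro mult_left_mono) (auto simp: B_def)
      also have "\<dots> = B (Suc m)"
        unfolding B_def by (simp add: prod.nat_ivl_Suc' algebra_simps)
      finally show ?case .
    qed
    have "j = k + (j - k)" using kj by simp
    hence "real (iter_prime j n) \<le> B (j - k)" using main[of "j-k"] by simp
    thus "real (iter_prime j n) \<le> 2 ^ (j - k) * real (iter_prime k n) *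
      (\<Prod>i = 1..j - k. ln (real (iter_prime k n)) + real i * ln (real i) * ln (ln (real (iter_prime k n))))"
      unfolding B_def x_def .
  qed
qed

end
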